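(* Let $G$ be a connected graph that is $(5,\epsilon)$-distance-almost-uniform. Then $G^4$ is $(2,\epsilon)$-distance-almost-uniform and $diam(G^4)=\lceil diam(G)/4\rceil$.
   Context: For a graph $G$ on $n$ vertices and $v\in V(G)$, $A_s(v)$ is the set of vertices at distance exactly $s$ from $v$. $G$ is $(k,\epsilon)$-distance-almost-uniform if there exists $r$ such that $\max_{i=0}^{k-1}|A_{r+i}(u)|\ge n(1-\epsilon)$ for all $u\in V(G)$. For an undirected graph $G=(V,E)$, $G^k$ is the graph on vertex set $V$ with edge set $\{uv: 0<d_G(u,v)\le k\}$. *)

theory Defs
  imports Complex_Main
begin

definition simple_graph :: "'a set \<Rightarrow> ('a \<times> 'a) set \<Rightarrow> bool" where
  "simple_graph V E \<longleftrightarrow> finite V \<and> V \<noteq> {} \<and> E \<subseteq> V \<times> V \<and> sym E \<and> (\<forall>v. (v, v) \<notin> E)"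

definition graph_connected :: "'a set \<Rightarrow> ('a \<times> 'a) set \<Rightarrow> bool" where
  "graph_connected V E \<longleftrightarrow> (\<forall>u\<in>V. \<forall>v\<in>V. \<exists>k. (u, v) \<in> E ^^ k)"

text \<open>Graph distance: length of a shortest walk (0 if unreachable, irrelevant for connected graphs).\<close>
definition gdist :: "('a \<times> 'a) set \<Rightarrow> 'a \<Rightarrow> 'a \<Rightarrow> nat" where
  "gdist E u v = (LEAST k. (u, v) \<in> E ^^ k)"

definition sphere :: "'a set \<Rightarrow> ('a \<times> 'a) set \<Rightarrow> nat \<Rightarrow> 'a \<Rightarrow> 'a set" where
  "sphere V E s v = {u \<in> V. gdist E v u = s}"

definition dist_almost_uniform :: "'a set \<Rightarrow> ('a \<times> 'a) set \<Rightarrow> nat \<Rightarrow> real \<Rightarrow> bool" where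
  "dist_almost_uniform V E k \<epsilon> \<longleftrightarrow>
     (\<exists>r::nat. \<forall>u\<in>V. real (Max ((\<lambda>i. card (sphere V E (r + i) u)) ` {..<k})) \<ge> real (card V) * (1 - \<epsilon>))"

definition graph_power :: "'a set \<Rightarrow> ('a \<times> 'a) set \<Rightarrow> nat \<Rightarrow> ('a \<times> 'a) set" where
  "graph_power V E k = {(u, v). u \<in> V \<and> v \<in> V \<and> (\<exists>j. (u, v) \<in> E ^^ j) \<and> 0 < gdist E u v \<and> gdist E u v \<le> k}"

definition diameter :: "'a set \<Rightarrow> ('a \<times> 'a) set \<Rightarrow> nat" where
  "diameter V E = Max {gdist E u v | u v. u \<in> V \<and> v \<in> V}"

end

theory Submission
  imports Defs
begin

lemma relpow_V:
  assumes "E \<subseteq> V \<times> V" "(u,v) \<in> E ^^ k" "0 < k"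
  shows "v \<in> V"
proof -
  obtain n where "k = Suc n" using assms(3) by (cases k) auto
  then show ?thesis using assms by auto
qed

lemma gdist_walk:
  assumes "(u,v) \<in> E ^^ k"
  shows "(u,v) \<in> E ^^ gdist E u v \<and> gdist E u v \<le> k"
  unfolding gdist_def using assms by (metis LeastI Least_le)

lemma gdist_zero:
  assumes "(u,v) \<in> E ^^ k" "gdist E u v = 0"
  shows "u = v"
  using gdist_walk[OF assms(1)] assms(2) by auto

lemma P_edge:
  assumes "simple_graph V E" "u \<in> V" "(u,v) \<in> E ^^ m" "0 < m" "m \<le> 4" "u \<noteq> v"
  shows "(u,v) \<in> graph_power V E 4"
proof -
  have EV: "E \<subseteq> V \<times> V" using assms(1) unfolding simple_graph_def by auto
  have "v \<in> V" using relpow_V[OF EV assms(3,4)] .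
  moreover have "gdist E u v \<le> 4" using gdist_walk[OF assms(3)] assms(5) by auto
  moreover have "gdist E u v > 0" using gdist_zero[OF assms(3)] assms(6) by auto
  ultimately show ?thesis unfolding graph_power_def using assms by auto
qed

lemma P_walk:
  assumes "simple_graph V E" "u \<in> V"
  shows "(u,v) \<in> E ^^ m \<Longrightarrow> \<exists>k \<le> (m+3) div 4. (u,v) \<in> graph_power V E 4 ^^ k"
proof (induction m arbitrary: v rule: less_induct)
  case (less m)
  have EV: "E \<subseteq> V \<times> V" using assms(1) unfolding simple_graph_def by auto
  show ?case
  proof (cases "m = 0")
    case True
    then show ?thesis using less.prems by (intro exI[of _ 0]) auto
  next
    case False
    show ?thesis
    proof (cases "m \<le> 4")
      case True
      show ?thesis
      proof (cases "u = v")
        case True then show ?thesis by (intro exI[of _ 0]) auto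
      next
        case False
        have "(u,v) \<in> graph_power V E 4"
          using P_edge[OF assms less.prems] \<open>m \<noteq> 0\<close> \<open>m \<le> 4\<close> False by auto
        then show ?thesis using \<open>m \<noteq> 0\<close> by (intro exI[of _ 1]) auto
      qed
    next
      case False
      have "(u,v) \<in> E ^^ (m - 4) O E ^^ 4"
        using less.prems relpow_add[of "m-4" 4 E] False by simp
      then obtain w where w1: "(u,w) \<in> E ^^ (m-4)" and w2: "(w,v) \<in> E ^^ 4" by auto
      obtain k' where k': "k' \<le> (m - 4 + 3) div 4" "(u,w) \<in> graph_power V E 4 ^^ k'"
        using less.IH[OF _ w1] False by auto
      have wV: "w \<in> V" using relpow_V[OF EV w1] False by auto
      show ?thesis
      proof (cases "w = v")
        case True then show ?thesis using k' False by (intro exI[of _ k']) auto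
      next
        case ne: False
        have "(w,v) \<in> graph_power V E 4" using P_edge[OF assms(1) wV w2] ne by auto
        then have "(u,v) \<in> graph_power V E 4 ^^ Suc k'" using k' by auto
        moreover have "Suc k' \<le> (m+3) div 4" using k' False by auto
        ultimately show ?thesis by blast
      qed
    qed
  qed
qed

lemma P_back:
  "(u,v) \<in> graph_power V E 4 ^^ k \<Longrightarrow> \<exists>j \<le> 4*k. (u,v) \<in> E ^^ j"
proof (induction k arbitrary: v)
  case 0 then show ?case by (intro exI[of _ 0]) auto
next
  case (Suc k)
  then obtain w where w1: "(u,w) \<in> graph_power V E 4 ^^ k" and w2: "(w,v) \<in> graph_power V E 4"
    by auto
  obtain j where j: "j \<le> 4*k" "(u,w) \<in> E ^^ j" using Suc.IH[OF w1] by auto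
  from w2 obtain i where "(w,v) \<in> E ^^ i" and g: "gdist E w v \<le> 4"
    unfolding graph_power_def by auto
  then have "(w,v) \<in> E ^^ gdist E w v" using gdist_walk[of w v i E] by blast
  then have "(u,v) \<in> E ^^ (j + gdist E w v)" using j relpow_add[of j "gdist E w v" E] by auto
  then show ?case using j g by (intro exI[of _ "j + gdist E w v"]) auto
qed

lemma P_dist:
  assumes "simple_graph V E" "graph_connected V E" "u \<in> V" "v \<in> V"
  shows "gdist (graph_power V E 4) u v = (gdist E u v + 3) div 4"
proof -
  obtain k0 where "(u,v) \<in> E ^^ k0" using assms unfolding graph_connected_def by auto
  then have d: "(u,v) \<in> E ^^ gdist E u v" using gdist_walk[of u v k0 E] by blast
  obtain k where k: "k \<le> (gdist E u v + 3) div 4" "(u,v) \<in> graph_power V E 4 ^^ k"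
    using P_walk[OF assms(1,3) d] by auto
  have p: "(u,v) \<in> graph_power V E 4 ^^ gdist (graph_power V E 4) u v"
    "gdist (graph_power V E 4) u v \<le> k" using gdist_walk[OF k(2)] by auto
  obtain j where j: "j \<le> 4 * gdist (graph_power V E 4) u v" "(u,v) \<in> E ^^ j"
    using P_back[OF p(1)] by auto
  have "gdist E u v \<le> j" using gdist_walk[OF j(2)] by auto
  then show ?thesis using j(1) k(1) p(2) by linarith
qed

lemma ceil_div4: "nat \<lceil>real d / 4\<rceil> = (d + 3) div 4"
proof -
  have "\<lceil>real d / 4\<rceil> = int ((d + 3) div 4)"
  proof (rule ceiling_unique)
    show "real_of_int (int ((d + 3) div 4)) - 1 < real d / 4"
      using div_mult_mod_eq[of "d+3" 4] mod_less_divisor[of 4 "d+3"]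
      by (simp add: field_simps; linarith)
    show "real d / 4 \<le> real_of_int (int ((d + 3) div 4))"
      using div_mult_mod_eq[of "d+3" 4] mod_less_divisor[of 4 "d+3"]
      by (simp add: field_simps; linarith)
  qed
  then show ?thesis by simp
qed

theorem proposition10:
  fixes V :: "'a set" and E :: "('a \<times> 'a) set" and \<epsilon> :: real
  assumes "simple_graph V E"
    and "graph_connected V E"
    and "dist_almost_uniform V E 5 \<epsilon>"
  shows "dist_almost_uniform V (graph_power V E 4) 2 \<epsilon>
       \<and> diameter V (graph_power V E 4) = nat \<lceil>real (diameter V E) / 4\<rceil>"
proof
  let ?P = "graph_power V E 4"
  have fin: "finite V" and ne: "V \<noteq> {}" using assms(1) unfolding simple_graph_def by auto
  obtain r where r: "\<forall>u\<in>V. real (Max ((\<lambda>i. card (sphere V E (r + i) u)) ` {..<5}))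
      \<ge> real (card V) * (1 - \<epsilon>)"
    using assms(3) unfolding dist_almost_uniform_def by auto
  show "dist_almost_uniform V ?P 2 \<epsilon>"
    unfolding dist_almost_uniform_def
  proof (intro exI[of _ "(r + 3) div 4"] ballI)
    fix u assume u: "u \<in> V"
    let ?S = "(\<lambda>i. card (sphere V E (r + i) u))"
    have "Max (?S ` {..<5}) \<in> ?S ` {..<5}" by (rule Max_in) (auto simp: lessThan_empty_iff)
    then obtain i where i: "i < 5" "Max (?S ` {..<5}) = ?S i" by auto
    obtain t where t: "t < 2" "(r + i + 3) div 4 = (r + 3) div 4 + t"
    proof -
      have "(r+3) div 4 \<le> (r+i+3) div 4 \<and> (r+i+3) div 4 < (r+3) div 4 + 2"
        using i(1) by presburger
      then show ?thesis using that[of "(r + i + 3) div 4 - (r + 3) div 4"] by auto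
    qed
    have sub: "sphere V E (r+i) u \<subseteq> sphere V ?P ((r + 3) div 4 + t) u"
      using P_dist[OF assms(1,2) u] t(2) unfolding sphere_def by auto
    have "?S i \<le> card (sphere V ?P ((r + 3) div 4 + t) u)"
      by (rule card_mono[OF _ sub]) (use fin in \<open>auto simp: sphere_def\<close>)
    also have "\<dots> \<le> Max ((\<lambda>i. card (sphere V ?P ((r + 3) div 4 + i) u)) ` {..<2})"
      by (rule Max_ge) (use t in auto)
    finally show "real (Max ((\<lambda>i. card (sphere V ?P ((r + 3) div 4 + i) u)) ` {..<2}))
      \<ge> real (card V) * (1 - \<epsilon>)" using r u i(2) by force
  qed
  let ?D = "{gdist E u v | u v. u \<in> V \<and> v \<in> V}"
  have eq: "{gdist ?P u v | u v. u \<in> V \<and> v \<in> V} = (\<lambda>d. (d + 3) div 4) ` ?D"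
    using P_dist[OF assms(1,2)] by (auto; metis)
  have finD: "finite ?D"
  proof -
    have "?D = (\<lambda>(u,v). gdist E u v) ` (V \<times> V)" by auto
    then show ?thesis using fin by simp
  qed
  have neD: "?D \<noteq> {}" using ne by auto
  have mono: "mono (\<lambda>d::nat. (d + 3) div 4)" by (rule monoI) (simp add: div_le_mono)
  show "diameter V ?P = nat \<lceil>real (diameter V E) / 4\<rceil>"
    unfolding diameter_def ceil_div4 eq
    using mono_Max_commute[OF mono finD neD] by simp
qed

end
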